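(* Let $G$ be a finite non-abelian group, let $m\ge 2$ be an integer, let $R$ be a Cayley subset of $G$ such that $\Gamma:=\mathrm{Cay}(G,R)$ is a GRR, $|\Gamma[R]_I|\le 1$ and $G=\langle R\setminus\Gamma[R]_I\rangle$, and let $x\in G$ satisfy one of: (1) $m\ge 3$, $x\notin\mathbf{Z}(G)$ and $o(x)>2$; (2) $m=2$ and $x^2\notin\mathbf{Z}(G)$; (3) $m=2$, $g^2\in\mathbf{Z}(G)$ for all $g\in G$, $x\notin\mathbf{Z}(G)\cup R$ and $o(x)>2$. In cases (1) or (3), let $\Theta$ be the graph with vertex set $G\times\{0,\dots,m-1\}$ (writing $g_i$ for $(g,i)$) whose edges are: $\{g_i,(rg)_i\}$ for all $i$, $g\in G$, $r\in R$; $\{g_i,g_{i+1}\}$ for all $g\in G$, $i\in\{0,\dots,m-2\}$; and $\{g_0,(xg)_{m-1}\}$ for all $g\in G$. In case (2), let $\Theta$ be the graph with vertex set $G\times\{0,1\}$ whose edges are $\{g_0,(rg)_0\}$, $\{g_1,(rg)_1\}$ for $g\in G$, $r\in R$, and $\{g_0,(xg)_1\}$ for $g\in G$. Then $\Theta$ is an $m$-GRR for $G$.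
   Context: All groups and graphs are finite and simple. A Cayley subset of $G$ is $R\subseteq G$ with $R=R^{-1}$, $1\notin R$; $\mathrm{Cay}(G,R)$ has vertex set $G$ and edges $\{g,rg\}$, $r\in R$; it is a GRR if its automorphism group is (the right regular copy of) $G$. $\Gamma[R]_I$ is the set of isolated vertices of the subgraph of $\Gamma$ induced on $R$. $\mathbf{Z}(G)$ is the center, $o(g)$ the order of $g$. An $m$-GRR for $G$ is a regular graph having a semiregular automorphism group isomorphic to $G$ with $m$ vertex-orbits and whose full automorphism group is isomorphic to $G$ (here: the group of maps $y_i\mapsto (yg)_i$). *)

theory Defs
  imports "HOL-Algebra.Algebra"
begin

(* Automorphisms of (V,E): permutations of V preserving adjacency; extended by the
   identity outside V so that automorphisms are unique as HOL functions. *)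
definition graph_aut :: "'v set \<Rightarrow> ('v \<Rightarrow> 'v \<Rightarrow> bool) \<Rightarrow> ('v \<Rightarrow> 'v) \<Rightarrow> bool" where
  "graph_aut V E f \<longleftrightarrow> bij_betw f V V \<and>
     (\<forall>u\<in>V. \<forall>v\<in>V. E u v \<longleftrightarrow> E (f u) (f v)) \<and> (\<forall>v. v \<notin> V \<longrightarrow> f v = v)"

definition regular_graph :: "'v set \<Rightarrow> ('v \<Rightarrow> 'v \<Rightarrow> bool) \<Rightarrow> bool" where
  "regular_graph V E \<longleftrightarrow> (\<exists>k. \<forall>v\<in>V. card {u\<in>V. E v u} = k)"

definition group_center :: "('a, 'b) monoid_scheme \<Rightarrow> 'a set" where
  "group_center G = {z \<in> carrier G. \<forall>g\<in>carrier G. z \<otimes>\<^bsub>G\<^esub> g = g \<otimes>\<^bsub>G\<^esub> z}"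

definition cayley_subset :: "('a, 'b) monoid_scheme \<Rightarrow> 'a set \<Rightarrow> bool" where
  "cayley_subset G R \<longleftrightarrow> R \<subseteq> carrier G \<and> (\<forall>r\<in>R. inv\<^bsub>G\<^esub> r \<in> R) \<and> \<one>\<^bsub>G\<^esub> \<notin> R"

definition cay_adj :: "('a, 'b) monoid_scheme \<Rightarrow> 'a set \<Rightarrow> 'a \<Rightarrow> 'a \<Rightarrow> bool" where
  "cay_adj G R g h \<longleftrightarrow> g \<in> carrier G \<and> h \<in> carrier G \<and>
     (\<exists>r\<in>R. h = r \<otimes>\<^bsub>G\<^esub> g \<or> g = r \<otimes>\<^bsub>G\<^esub> h)"

definition right_mult :: "('a, 'b) monoid_scheme \<Rightarrow> 'a \<Rightarrow> 'a \<Rightarrow> 'a" where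
  "right_mult G g = (\<lambda>y. if y \<in> carrier G then y \<otimes>\<^bsub>G\<^esub> g else y)"

definition is_GRR :: "('a, 'b) monoid_scheme \<Rightarrow> 'a set \<Rightarrow> bool" where
  "is_GRR G R \<longleftrightarrow> {f. graph_aut (carrier G) (cay_adj G R) f} = right_mult G ` carrier G"

definition isolated_in_R :: "('a, 'b) monoid_scheme \<Rightarrow> 'a set \<Rightarrow> 'a set" where
  "isolated_in_R G R = {r \<in> R. \<forall>s\<in>R. \<not> cay_adj G R r s}"

definition layers :: "('a, 'b) monoid_scheme \<Rightarrow> nat \<Rightarrow> ('a \<times> nat) set" where
  "layers G m = carrier G \<times> {0..<m}"

definition layer_right_mult :: "('a, 'b) monoid_scheme \<Rightarrow> nat \<Rightarrow> 'a \<Rightarrow> 'a \<times> nat \<Rightarrow> 'a \<times> nat" where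
  "layer_right_mult G m g = (\<lambda>(y, i). if (y, i) \<in> layers G m then (y \<otimes>\<^bsub>G\<^esub> g, i) else (y, i))"

definition is_mGRR :: "('a, 'b) monoid_scheme \<Rightarrow> nat \<Rightarrow> ('a \<times> nat \<Rightarrow> 'a \<times> nat \<Rightarrow> bool) \<Rightarrow> bool" where
  "is_mGRR G m E \<longleftrightarrow> regular_graph (layers G m) E \<and>
     {f. graph_aut (layers G m) E f} = layer_right_mult G m ` carrier G"

definition theta1_gen :: "('a, 'b) monoid_scheme \<Rightarrow> 'a set \<Rightarrow> 'a \<Rightarrow> nat \<Rightarrow> 'a \<times> nat \<Rightarrow> 'a \<times> nat \<Rightarrow> bool" where
  "theta1_gen G R x m a b \<longleftrightarrow> (case a of (g, i) \<Rightarrow> case b of (h, j) \<Rightarrow>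
      (i = j \<and> (\<exists>r\<in>R. h = r \<otimes>\<^bsub>G\<^esub> g))
    \<or> (h = g \<and> i \<le> m - 2 \<and> j = i + 1)
    \<or> (i = 0 \<and> j = m - 1 \<and> h = x \<otimes>\<^bsub>G\<^esub> g))"

definition theta1 :: "('a, 'b) monoid_scheme \<Rightarrow> 'a set \<Rightarrow> 'a \<Rightarrow> nat \<Rightarrow> 'a \<times> nat \<Rightarrow> 'a \<times> nat \<Rightarrow> bool" where
  "theta1 G R x m a b \<longleftrightarrow> a \<in> layers G m \<and> b \<in> layers G m \<and>
     (theta1_gen G R x m a b \<or> theta1_gen G R x m b a)"

definition theta2_gen :: "('a, 'b) monoid_scheme \<Rightarrow> 'a set \<Rightarrow> 'a \<Rightarrow> 'a \<times> nat \<Rightarrow> 'a \<times> nat \<Rightarrow> bool" where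
  "theta2_gen G R x a b \<longleftrightarrow> (case a of (g, i) \<Rightarrow> case b of (h, j) \<Rightarrow>
      (i = j \<and> (\<exists>r\<in>R. h = r \<otimes>\<^bsub>G\<^esub> g))
    \<or> (i = 0 \<and> j = 1 \<and> h = x \<otimes>\<^bsub>G\<^esub> g))"

definition theta2 :: "('a, 'b) monoid_scheme \<Rightarrow> 'a set \<Rightarrow> 'a \<Rightarrow> 'a \<times> nat \<Rightarrow> 'a \<times> nat \<Rightarrow> bool" where
  "theta2 G R x a b \<longleftrightarrow> a \<in> layers G 2 \<and> b \<in> layers G 2 \<and>
     (theta2_gen G R x a b \<or> theta2_gen G R x b a)"

end

theory Submission
  imports Defs
begin


lemma layers_mem[simp]: "(g, i) \<in> layers G m \<longleftrightarrow> g \<in> carrier G \<and> i < m"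
  by (simp add: layers_def)

lemma layer_right_mult_in: "(g, i) \<in> layers G m \<Longrightarrow> layer_right_mult G m a (g, i) = (g \<otimes>\<^bsub>G\<^esub> a, i)"
  by (simp add: layer_right_mult_def)

context group
begin

lemma layer_rm_aut:
  assumes EL: "\<And>u v. E u v \<Longrightarrow> u \<in> layers G m \<and> v \<in> layers G m"
  and Eright: "\<And>g h i j a. g \<in> carrier G \<Longrightarrow> h \<in> carrier G \<Longrightarrow> a \<in> carrier G \<Longrightarrow> i < m \<Longrightarrow> j < m
      \<Longrightarrow> E (g,i) (h,j) \<longleftrightarrow> E (g \<otimes> a, i) (h \<otimes> a, j)"
  and a: "a \<in> carrier G"
  shows "graph_aut (layers G m) E (layer_right_mult G m a)"
  unfolding graph_aut_def
proof (intro conjI ballI allI impI)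
  show "bij_betw (layer_right_mult G m a) (layers G m) (layers G m)"
  proof (rule bij_betw_byWitness[where f'="layer_right_mult G m (inv a)"])
    show "\<forall>u\<in>layers G m. layer_right_mult G m (inv a) (layer_right_mult G m a u) = u"
      using a by (auto simp: layer_right_mult_in m_assoc)
    show "\<forall>u\<in>layers G m. layer_right_mult G m a (layer_right_mult G m (inv a) u) = u"
      using a by (auto simp: layer_right_mult_in m_assoc)
    show "layer_right_mult G m a ` layers G m \<subseteq> layers G m"
      using a by (auto simp: layer_right_mult_in)
    show "layer_right_mult G m (inv a) ` layers G m \<subseteq> layers G m"
      using a by (auto simp: layer_right_mult_in)
  qed
next
  fix u v assume "u \<in> layers G m" "v \<in> layers G m"
  then show "E u v = E (layer_right_mult G m a u) (layer_right_mult G m a v)"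
    using a Eright by (cases u, cases v) (auto simp: layer_right_mult_in)
next
  fix v assume "v \<notin> layers G m"
  then show "layer_right_mult G m a v = v"
    by (cases v) (auto simp: layer_right_mult_def)
qed

lemma aut_sub:
  assumes cs: "cayley_subset G R" and grr: "is_GRR G R"
  and gen: "generate G (R - isolated_in_R G R) = carrier G"
  and m0: "0 < m"
  and EL: "\<And>u v. E u v \<Longrightarrow> u \<in> layers G m \<and> v \<in> layers G m"
  and Eintra: "\<And>g h i. g \<in> carrier G \<Longrightarrow> h \<in> carrier G \<Longrightarrow> i < m
      \<Longrightarrow> E (g,i) (h,i) \<longleftrightarrow> cay_adj G R g h"
  and Etri: "\<And>u v w. E u v \<Longrightarrow> E u w \<Longrightarrow> E v w \<Longrightarrow> snd u = snd v"
  and Erigid: "\<And>\<sigma> a. (\<And>i. i < m \<Longrightarrow> \<sigma> i < m) \<Longrightarrow> inj_on \<sigma> {..<m}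
      \<Longrightarrow> (\<And>i. i < m \<Longrightarrow> a i \<in> carrier G)
      \<Longrightarrow> (\<And>g h i j. g \<in> carrier G \<Longrightarrow> h \<in> carrier G \<Longrightarrow> i < m \<Longrightarrow> j < m \<Longrightarrow> E (g,i) (h,j)
            \<Longrightarrow> E (g \<otimes> a i, \<sigma> i) (h \<otimes> a j, \<sigma> j))
      \<Longrightarrow> (\<forall>i<m. \<sigma> i = i \<and> a i = a 0)"
  and phi: "graph_aut (layers G m) E \<phi>"
  shows "\<exists>b\<in>carrier G. \<phi> = layer_right_mult G m b"
proof -
  let ?L = "layers G m"
  let ?I = "isolated_in_R G R"
  have bij: "bij_betw \<phi> ?L ?L" using phi[unfolded graph_aut_def] by (rule conjunct1)
  have adjA: "\<forall>u\<in>?L. \<forall>v\<in>?L. E u v \<longleftrightarrow> E (\<phi> u) (\<phi> v)"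
    using phi[unfolded graph_aut_def] by (rule conjunct2[THEN conjunct1])
  have outA: "\<forall>v. v \<notin> ?L \<longrightarrow> \<phi> v = v"
    using phi[unfolded graph_aut_def] by (rule conjunct2[THEN conjunct2])
  note adj = adjA[rule_format] and out = outA[rule_format]
  have phiL: "\<phi> u \<in> ?L" if "u \<in> ?L" for u using bij that by (rule bij_betw_apply)
  have Rc: "R \<subseteq> carrier G" using cs unfolding cayley_subset_def by auto
  have R1: "\<one> \<notin> R" using cs unfolding cayley_subset_def by auto
  have tri_edge: "snd (\<phi> (s \<otimes> g, i)) = snd (\<phi> (g, i))"
    if g: "g \<in> carrier G" and s: "s \<in> R - ?I" and i: "i < m" for g s i
  proof -
    from s obtain s' t where s': "s' \<in> R" and t: "t \<in> R" and sc: "s \<in> carrier G" "s \<in> R"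
      and st: "s' = t \<otimes> s \<or> s = t \<otimes> s'"
      unfolding isolated_in_R_def cay_adj_def by auto
    have s'c: "s' \<in> carrier G" and tc: "t \<in> carrier G" using s' t Rc by auto
    have 1: "E (g,i) (s \<otimes> g, i)" using Eintra[of g "s \<otimes> g" i] g sc i unfolding cay_adj_def by auto
    have 2: "E (g,i) (s' \<otimes> g, i)" using Eintra[of g "s' \<otimes> g" i] g s' s'c i unfolding cay_adj_def by auto
    have "cay_adj G R (s \<otimes> g) (s' \<otimes> g)"
      unfolding cay_adj_def using st t tc sc s'c g by (auto simp: m_assoc)
    then have 3: "E (s \<otimes> g,i) (s' \<otimes> g, i)" using Eintra g sc s'c i by auto
    have L: "(g,i) \<in> ?L" "(s \<otimes> g, i) \<in> ?L" "(s' \<otimes> g, i) \<in> ?L" using g sc s'c i by auto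
    show ?thesis using Etri[OF adj[OF L(1,2), THEN iffD1, OF 1] adj[OF L(1,3), THEN iffD1, OF 2]
        adj[OF L(2,3), THEN iffD1, OF 3]] by simp
  qed
  have genP: "\<forall>g\<in>carrier G. \<forall>i<m. snd (\<phi> (h \<otimes> g, i)) = snd (\<phi> (g, i))"
    if "h \<in> generate G (R - ?I)" for h
    using that
  proof (induction h rule: generate.induct)
    case one
    then show ?case by simp
  next
    case (incl h)
    then show ?case using tri_edge by blast
  next
    case (inv h)
    show ?case
    proof (intro ballI allI impI)
      fix g i assume g: "g \<in> carrier G" and i: "i < m"
      have hc: "h \<in> carrier G" using inv Rc by auto
      have "snd (\<phi> (h \<otimes> (inv h \<otimes> g), i)) = snd (\<phi> (inv h \<otimes> g, i))"
        using tri_edge[OF _ inv i] g hc by auto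
      then show "snd (\<phi> (inv h \<otimes> g, i)) = snd (\<phi> (g, i))"
        using g hc by (simp add: m_assoc[symmetric])
    qed
  next
    case (eng h1 h2)
    have c: "h1 \<in> carrier G" "h2 \<in> carrier G"
      using eng.hyps generate_in_carrier[of "R - ?I"] Rc by auto
    show ?case
    proof (intro ballI allI impI)
      fix g i assume g: "g \<in> carrier G" and i: "i < m"
      have "snd (\<phi> (h1 \<otimes> (h2 \<otimes> g), i)) = snd (\<phi> (h2 \<otimes> g, i))"
        using eng.IH(1) g c i by auto
      also have "\<dots> = snd (\<phi> (g, i))" using eng.IH(2) g i by auto
      finally show "snd (\<phi> (h1 \<otimes> h2 \<otimes> g, i)) = snd (\<phi> (g, i))"
        using g c by (simp add: m_assoc)
    qed
  qed
  define \<sigma> where "\<sigma> i = snd (\<phi> (\<one>, i))" for i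
  have layer: "snd (\<phi> (g, i)) = \<sigma> i" if "g \<in> carrier G" "i < m" for g i
  proof -
    have "g \<in> generate G (R - ?I)" using that gen by simp
    then have "snd (\<phi> (g \<otimes> \<one>, i)) = snd (\<phi> (\<one>, i))" using genP that by blast
    then show ?thesis using that unfolding \<sigma>_def by simp
  qed
  have \<sigma>m: "\<sigma> i < m" if "i < m" for i
    using phiL[of "(\<one>, i)"] that unfolding \<sigma>_def by (cases "\<phi> (\<one>, i)") auto
  have \<sigma>surj: "\<sigma> ` {..<m} = {..<m}"
  proof
    show "\<sigma> ` {..<m} \<subseteq> {..<m}" using \<sigma>m by auto
    show "{..<m} \<subseteq> \<sigma> ` {..<m}"
    proof
      fix j assume j: "j \<in> {..<m}"
      then have "(\<one>, j) \<in> \<phi> ` ?L" using bij unfolding bij_betw_def by auto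
      then obtain g k where gk: "(g,k) \<in> ?L" "\<phi> (g,k) = (\<one>, j)" by auto
      then have "\<sigma> k = j" using layer[of g k] by auto
      then show "j \<in> \<sigma> ` {..<m}" using gk by auto
    qed
  qed
  have \<sigma>inj: "inj_on \<sigma> {..<m}"
    by (rule eq_card_imp_inj_on) (auto simp: \<sigma>surj)
  have "\<forall>i. \<exists>b. i < m \<longrightarrow> b \<in> carrier G \<and> (\<forall>g\<in>carrier G. \<phi> (g, i) = (g \<otimes> b, \<sigma> i))"
  proof (intro allI)
    fix i
    show "\<exists>b. i < m \<longrightarrow> b \<in> carrier G \<and> (\<forall>g\<in>carrier G. \<phi> (g, i) = (g \<otimes> b, \<sigma> i))"
    proof (cases "i < m")
      case False then show ?thesis by auto
    next
      case i: True
      define F where "F g = (if g \<in> carrier G then fst (\<phi> (g, i)) else g)" for g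
      have phiF: "\<phi> (g, i) = (F g, \<sigma> i)" if "g \<in> carrier G" for g
        using layer[OF that i] that unfolding F_def by (cases "\<phi> (g,i)") auto
      have Fc: "F g \<in> carrier G" if "g \<in> carrier G" for g
        using phiL[of "(g,i)"] that i phiF[OF that] by auto
      have "graph_aut (carrier G) (cay_adj G R) F"
        unfolding graph_aut_def
      proof (intro conjI ballI allI impI)
        show "bij_betw F (carrier G) (carrier G)"
          unfolding bij_betw_def
        proof
          show "inj_on F (carrier G)"
          proof (rule inj_onI)
            fix g h assume g: "g \<in> carrier G" and h: "h \<in> carrier G" and e: "F g = F h"
            then have "\<phi> (g, i) = \<phi> (h, i)" using phiF by auto
            moreover have "(g, i) \<in> ?L" "(h, i) \<in> ?L" using g h i by auto
            ultimately have "(g, i) = (h, i)" using bij unfolding bij_betw_def inj_on_def by blast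
            then show "g = h" by simp
          qed
          show "F ` carrier G = carrier G"
          proof
            show "F ` carrier G \<subseteq> carrier G" using Fc by auto
            show "carrier G \<subseteq> F ` carrier G"
            proof
              fix h assume h: "h \<in> carrier G"
              then have "(h, \<sigma> i) \<in> \<phi> ` ?L" using bij \<sigma>m[OF i] unfolding bij_betw_def by auto
              then obtain g k where gk: "(g,k) \<in> ?L" "\<phi> (g,k) = (h, \<sigma> i)" by auto
              then have "\<sigma> k = \<sigma> i" using layer[of g k] by auto
              then have "k = i" using \<sigma>inj gk i unfolding inj_on_def by auto
              then show "h \<in> F ` carrier G" using gk phiF by force
            qed
          qed
        qed
      next
        fix g h assume g: "g \<in> carrier G" and h: "h \<in> carrier G"
        have "cay_adj G R g h \<longleftrightarrow> E (g,i) (h,i)" using Eintra g h i by simp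
        also have "\<dots> \<longleftrightarrow> E (\<phi> (g,i)) (\<phi> (h,i))" using g h i by (intro adj) auto
        also have "\<dots> \<longleftrightarrow> E (F g, \<sigma> i) (F h, \<sigma> i)" using phiF g h by simp
        also have "\<dots> \<longleftrightarrow> cay_adj G R (F g) (F h)" using Eintra Fc g h \<sigma>m i by simp
        finally show "cay_adj G R g h = cay_adj G R (F g) (F h)" .
      next
        fix g assume "g \<notin> carrier G" then show "F g = g" unfolding F_def by simp
      qed
      then have "F \<in> right_mult G ` carrier G" using grr unfolding is_GRR_def by auto
      then obtain b where b: "b \<in> carrier G" "F = right_mult G b" by auto
      show ?thesis using b phiF i unfolding right_mult_def by auto
    qed
  qed
  then have "\<exists>a. \<forall>i. i < m \<longrightarrow> a i \<in> carrier G \<and> (\<forall>g\<in>carrier G. \<phi> (g, i) = (g \<otimes> a i, \<sigma> i))"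
    by (rule choice)
  then obtain a where A: "\<forall>i. i < m \<longrightarrow> a i \<in> carrier G \<and> (\<forall>g\<in>carrier G. \<phi> (g, i) = (g \<otimes> a i, \<sigma> i))"
    by blast
  have a: "\<And>i. i < m \<Longrightarrow> a i \<in> carrier G" using A by blast
  have phia: "\<And>i g. i < m \<Longrightarrow> g \<in> carrier G \<Longrightarrow> \<phi> (g, i) = (g \<otimes> a i, \<sigma> i)" using A by blast
  have pres: "E (g \<otimes> a i, \<sigma> i) (h \<otimes> a j, \<sigma> j)"
    if "g \<in> carrier G" "h \<in> carrier G" "i < m" "j < m" "E (g,i) (h,j)" for g h i j
  proof -
    have "E (\<phi> (g,i)) (\<phi> (h,j))" using adj[of "(g,i)" "(h,j)"] that by auto
    then show ?thesis using that phia by simp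
  qed
  have rig: "\<forall>i<m. \<sigma> i = i \<and> a i = a 0"
    by (rule Erigid[OF \<sigma>m \<sigma>inj a pres]) auto
  show ?thesis
  proof (intro bexI)
    show "a 0 \<in> carrier G" using a m0 by auto
    show "\<phi> = layer_right_mult G m (a 0)"
    proof
      fix u show "\<phi> u = layer_right_mult G m (a 0) u"
      proof (cases "u \<in> ?L")
        case True
        then obtain g i where u: "u = (g,i)" "g \<in> carrier G" "i < m" by (cases u) auto
        then have "\<sigma> i = i" "a i = a 0" using rig u(3) by blast+
        then show ?thesis using phia u by (simp add: layer_right_mult_in)
      next
        case False
        then show ?thesis using out by (cases u) (auto simp: layer_right_mult_def)
      qed
    qed
  qed
qed

lemma aut_char:
  assumes cs: "cayley_subset G R" and grr: "is_GRR G R"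
  and gen: "generate G (R - isolated_in_R G R) = carrier G"
  and m0: "0 < m"
  and EL: "\<And>u v. E u v \<Longrightarrow> u \<in> layers G m \<and> v \<in> layers G m"
  and Eintra: "\<And>g h i. g \<in> carrier G \<Longrightarrow> h \<in> carrier G \<Longrightarrow> i < m
      \<Longrightarrow> E (g,i) (h,i) \<longleftrightarrow> cay_adj G R g h"
  and Eright: "\<And>g h i j a. g \<in> carrier G \<Longrightarrow> h \<in> carrier G \<Longrightarrow> a \<in> carrier G \<Longrightarrow> i < m \<Longrightarrow> j < m
      \<Longrightarrow> E (g,i) (h,j) \<longleftrightarrow> E (g \<otimes> a, i) (h \<otimes> a, j)"
  and Etri: "\<And>u v w. E u v \<Longrightarrow> E u w \<Longrightarrow> E v w \<Longrightarrow> snd u = snd v"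
  and Erigid: "\<And>\<sigma> a. (\<And>i. i < m \<Longrightarrow> \<sigma> i < m) \<Longrightarrow> inj_on \<sigma> {..<m}
      \<Longrightarrow> (\<And>i. i < m \<Longrightarrow> a i \<in> carrier G)
      \<Longrightarrow> (\<And>g h i j. g \<in> carrier G \<Longrightarrow> h \<in> carrier G \<Longrightarrow> i < m \<Longrightarrow> j < m \<Longrightarrow> E (g,i) (h,j)
            \<Longrightarrow> E (g \<otimes> a i, \<sigma> i) (h \<otimes> a j, \<sigma> j))
      \<Longrightarrow> (\<forall>i<m. \<sigma> i = i \<and> a i = a 0)"
  shows "{f. graph_aut (layers G m) E f} = layer_right_mult G m ` carrier G"
proof
  show "{f. graph_aut (layers G m) E f} \<subseteq> layer_right_mult G m ` carrier G"
  proof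
    fix f assume "f \<in> {f. graph_aut (layers G m) E f}"
    then have "graph_aut (layers G m) E f" by simp
    note g = this
    have "\<exists>b\<in>carrier G. f = layer_right_mult G m b"
      using cs grr gen m0 EL Eintra Etri Erigid g by (rule aut_sub[where E=E and R=R and m=m and \<phi>=f])
    then show "f \<in> layer_right_mult G m ` carrier G" by blast
  qed
  show "layer_right_mult G m ` carrier G \<subseteq> {f. graph_aut (layers G m) E f}"
  proof
    fix f assume "f \<in> layer_right_mult G m ` carrier G"
    then obtain b where b: "b \<in> carrier G" "f = layer_right_mult G m b" by blast
    have "graph_aut (layers G m) E (layer_right_mult G m b)"
      using EL Eright b(1) by (rule layer_rm_aut[where E=E])
    then show "f \<in> {f. graph_aut (layers G m) E f}" using b by simp
  qed
qed

end




definition volt :: "('a, 'b) monoid_scheme \<Rightarrow> 'a \<Rightarrow> nat \<Rightarrow> nat \<Rightarrow> nat \<Rightarrow> 'a" where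
  "volt G x m i j = (if i = 0 \<and> j = m - 1 then x else if i = m - 1 \<and> j = 0 then inv\<^bsub>G\<^esub> x else \<one>\<^bsub>G\<^esub>)"

definition ladj :: "nat \<Rightarrow> nat \<Rightarrow> nat \<Rightarrow> bool" where
  "ladj m i j \<longleftrightarrow> (j = i + 1 \<or> i = j + 1 \<or> (i = 0 \<and> j = m - 1) \<or> (i = m - 1 \<and> j = 0))"

lemma theta1_simp: "theta1 G R x m (g,i) (h,j) \<longleftrightarrow> g \<in> carrier G \<and> h \<in> carrier G \<and> i < m \<and> j < m \<and>
   ((i = j \<and> (\<exists>r\<in>R. h = r \<otimes>\<^bsub>G\<^esub> g \<or> g = r \<otimes>\<^bsub>G\<^esub> h)) \<or> (h = g \<and> i \<le> m - 2 \<and> j = i + 1)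
    \<or> (g = h \<and> j \<le> m - 2 \<and> i = j + 1) \<or> (i = 0 \<and> j = m - 1 \<and> h = x \<otimes>\<^bsub>G\<^esub> g)
    \<or> (j = 0 \<and> i = m - 1 \<and> g = x \<otimes>\<^bsub>G\<^esub> h))"
  by (auto simp: theta1_def theta1_gen_def)

context group
begin

lemma theta1_intra:
  assumes "2 \<le> m"
  shows "theta1 G R x m (g,i) (h,i) \<longleftrightarrow> g \<in> carrier G \<and> h \<in> carrier G \<and> i < m \<and> cay_adj G R g h"
  using assms by (auto simp: theta1_simp cay_adj_def)

lemma theta1_inter3:
  assumes m3: "3 \<le> m" and x: "x \<in> carrier G" and ij: "i \<noteq> j"
  shows "theta1 G R x m (g,i) (h,j) \<longleftrightarrow> g \<in> carrier G \<and> h \<in> carrier G \<and> i < m \<and> j < m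
     \<and> ladj m i j \<and> h = volt G x m i j \<otimes> g"
proof (cases "i = 0 \<and> j = m - 1")
  case True
  then have "j \<noteq> i + 1" "i \<noteq> j + 1" "j \<noteq> 0" "ladj m i j" using m3 by (auto simp: ladj_def)
  then show ?thesis using True m3 ij by (simp add: theta1_simp volt_def)
next
  case F1: False
  show ?thesis
  proof (cases "i = m - 1 \<and> j = 0")
    case True
    then have "j \<noteq> i + 1" "i \<noteq> j + 1" "i \<noteq> 0" "ladj m i j" using m3 by (auto simp: ladj_def)
    moreover have "g = x \<otimes> h \<longleftrightarrow> h = inv x \<otimes> g" if "g \<in> carrier G" "h \<in> carrier G"
      using that x by (metis inv_closed inv_solve_left m_closed)
    ultimately show ?thesis using True m3 ij x by (simp add: theta1_simp volt_def) blast
  next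
    case False
    have v: "volt G x m i j = \<one>" unfolding volt_def using F1 False by auto
    have n1: "\<not>(i = 0 \<and> j = m - 1)" "\<not>(j = 0 \<and> i = m - 1)" using F1 False by auto
    have "ladj m i j \<longleftrightarrow> (i \<le> m - 2 \<and> j = i + 1) \<or> (j \<le> m - 2 \<and> i = j + 1)" if "i < m" "j < m"
      using n1 that m3 unfolding ladj_def by auto
    moreover have "theta1 G R x m (g,i) (h,j) \<longleftrightarrow> g \<in> carrier G \<and> h \<in> carrier G \<and> i < m \<and> j < m \<and>
       ((i \<le> m - 2 \<and> j = i + 1) \<or> (j \<le> m - 2 \<and> i = j + 1)) \<and> h = g"
      unfolding theta1_simp using n1 ij by blast
    ultimately show ?thesis using v by auto
  qed
qed

lemma volt_closed: "x \<in> carrier G \<Longrightarrow> volt G x m i j \<in> carrier G"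
  by (simp add: volt_def)

lemma volt_inv3:
  assumes "3 \<le> m" "x \<in> carrier G" "i \<noteq> j" "i < m" "j < m"
  shows "volt G x m j i \<otimes> volt G x m i j = \<one>"
  using assms by (auto simp: volt_def)

lemma theta1_tri3:
  assumes m3: "3 \<le> m" and x: "x \<in> carrier G" and x1: "x \<noteq> \<one>" and R1: "\<one> \<notin> R"
    and Rc: "R \<subseteq> carrier G"
    and uv: "theta1 G R x m u v" and uw: "theta1 G R x m u w" and vw: "theta1 G R x m v w"
  shows "snd u = snd v"
proof (rule ccontr)
  assume ne: "snd u \<noteq> snd v"
  obtain g i where u: "u = (g,i)" by (cases u)
  obtain h j where v: "v = (h,j)" by (cases v)
  obtain k l where w: "w = (k,l)" by (cases w)
  have ij: "i \<noteq> j" using ne u v by simp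
  have huv: "g \<in> carrier G" "h \<in> carrier G" "i < m" "j < m" "ladj m i j" "h = volt G x m i j \<otimes> g"
    using uv theta1_inter3[OF m3 x ij] u v by auto
  have kc: "k \<in> carrier G" "l < m" using uw u w by (auto simp: theta1_simp)
  show False
  proof (cases "l = i")
    case True
    have "k = volt G x m j i \<otimes> h" using vw theta1_inter3[OF m3 x, of j i] ij v w True by auto
    also have "\<dots> = g" using huv volt_inv3[OF m3 x ij] x volt_closed
      by (simp add: m_assoc[symmetric])
    finally have kg: "k = g" .
    then obtain r where "r \<in> R" "g = r \<otimes> g" using uw u w True m3 by (auto simp: theta1_simp)
    then show False using R1 Rc huv by (metis r_cancel_one' subsetD)
  next
    case F1: False
    show False
    proof (cases "l = j")
      case True
      have "k = volt G x m i j \<otimes> g" using uw theta1_inter3[OF m3 x ij] u w True by auto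
      then have kh: "k = h" using huv by simp
      then obtain r where "r \<in> R" "h = r \<otimes> h" using vw v w True m3 by (auto simp: theta1_simp)
      then show False using R1 Rc huv by (metis r_cancel_one' subsetD)
    next
      case False
      have k1: "ladj m i l" "k = volt G x m i l \<otimes> g" using uw theta1_inter3[OF m3 x, of i l] F1 u w by auto
      have k2: "ladj m j l" "k = volt G x m j l \<otimes> h" using vw theta1_inter3[OF m3 x, of j l] False v w by auto
      have eq: "volt G x m i l = volt G x m j l \<otimes> volt G x m i j"
      proof -
        have "volt G x m i l \<otimes> g = (volt G x m j l \<otimes> volt G x m i j) \<otimes> g"
          using k1(2) k2(2) huv(6) huv(1) x by (simp add: m_assoc volt_closed)
        then show ?thesis using huv(1) x by (simp add: volt_closed)
      qed
      have m3e: "m = 3"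
        using k1(1) k2(1) huv(3,4,5) kc(2) ij F1 False m3 unfolding ladj_def by arith
      have "i \<in> {0,1,2}" "j \<in> {0,1,2}" "l \<in> {0,1,2}" using huv(3,4) kc(2) m3e by auto
      moreover have "\<one> \<noteq> inv x" using x x1 by (metis inv_eq_1_iff)
      ultimately show False using eq x x1 ij F1 False m3e by (auto simp: volt_def)
    qed
  qed
qed

lemma central_inv:
  assumes x: "x \<in> carrier G" and g: "g \<in> carrier G" and c: "g \<otimes> inv x = inv x \<otimes> g"
  shows "g \<otimes> x = x \<otimes> g"
proof -
  have "x \<otimes> g = x \<otimes> (g \<otimes> inv x) \<otimes> x" using x g by (simp add: m_assoc)
  also have "\<dots> = x \<otimes> (inv x \<otimes> g) \<otimes> x" using c by simp
  also have "\<dots> = g \<otimes> x" using x g by (simp add: m_assoc[symmetric])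
  finally show ?thesis by simp
qed

lemma theta1_rigid3:
  assumes m3: "3 \<le> m" and x: "x \<in> carrier G" and nc: "\<exists>g\<in>carrier G. g \<otimes> x \<noteq> x \<otimes> g"
    and xx: "x \<otimes> x \<noteq> \<one>"
    and \<sigma>m: "\<And>i. i < m \<Longrightarrow> \<sigma> i < m" and inj: "inj_on \<sigma> {..<m}"
    and a: "\<And>i. i < m \<Longrightarrow> a i \<in> carrier G"
    and pres: "\<And>g h i j. g \<in> carrier G \<Longrightarrow> h \<in> carrier G \<Longrightarrow> i < m \<Longrightarrow> j < m
        \<Longrightarrow> theta1 G R x m (g,i) (h,j) \<Longrightarrow> theta1 G R x m (g \<otimes> a i, \<sigma> i) (h \<otimes> a j, \<sigma> j)"
  shows "\<forall>i<m. \<sigma> i = i \<and> a i = a 0"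
proof -
  have x1: "x \<noteq> \<one>" using nc x by auto
  have ix1: "inv x \<noteq> \<one>" using x x1 by (metis inv_eq_1_iff)
  have step: "a (i+1) = a i \<and> (\<sigma> (i+1) = \<sigma> i + 1 \<or> \<sigma> i = \<sigma> (i+1) + 1)" if i: "i + 1 < m" for i
  proof -
    have ne: "\<sigma> i \<noteq> \<sigma> (i+1)" using inj i unfolding inj_on_def by force
    define c where "c = volt G x m (\<sigma> i) (\<sigma> (i+1))"
    have cc: "c \<in> carrier G" unfolding c_def using x by (rule volt_closed)
    have E: "ladj m (\<sigma> i) (\<sigma> (i+1)) \<and> g \<otimes> a (i+1) = c \<otimes> (g \<otimes> a i)" if g: "g \<in> carrier G" for g
    proof -
      have T: "theta1 G R x m (g,i) (g,i+1)" using g i by (simp add: theta1_simp, arith)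
      have im: "i < m" using i by simp
      have "theta1 G R x m (g \<otimes> a i, \<sigma> i) (g \<otimes> a (i+1), \<sigma> (i+1))" using pres[OF g g im i T] .
      then show ?thesis using theta1_inter3[OF m3 x ne] unfolding c_def by simp
    qed
    have ai: "a i \<in> carrier G" "a (i+1) \<in> carrier G" using a i by auto
    have a1: "a (i+1) = c \<otimes> a i" using E[of \<one>] ai by simp
    have comm: "g \<otimes> c = c \<otimes> g" if g: "g \<in> carrier G" for g
    proof -
      have "(g \<otimes> c) \<otimes> a i = (c \<otimes> g) \<otimes> a i" using E[OF g] a1 g cc ai by (simp add: m_assoc)
      then show ?thesis using g cc ai by simp
    qed
    have c1: "c = \<one>"
    proof (rule ccontr)
      assume "c \<noteq> \<one>"
      then have "c = x \<or> c = inv x" unfolding c_def volt_def by (auto split: if_splits)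
      moreover obtain g0 where g0: "g0 \<in> carrier G" "g0 \<otimes> x \<noteq> x \<otimes> g0" using nc by blast
      moreover have "g0 \<otimes> c = c \<otimes> g0" using comm g0(1) .
      ultimately show False using central_inv[OF x g0(1)] by blast
    qed
    have "ladj m (\<sigma> i) (\<sigma> (i+1))" using E[of \<one>] by simp
    moreover have "\<not> (\<sigma> i = 0 \<and> \<sigma> (i+1) = m - 1)" "\<not> (\<sigma> i = m - 1 \<and> \<sigma> (i+1) = 0)"
      using c1 x1 ix1 ne unfolding c_def volt_def by (auto split: if_splits)
    ultimately show ?thesis using a1 c1 ai unfolding ladj_def by auto
  qed
  have aeq: "i < m \<longrightarrow> a i = a 0" for i
  proof (induction i)
    case 0 then show ?case by simp
  next
    case (Suc i) then show ?case using step[of i] by auto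
  qed
  have m1: "0 < m" "m - 1 < m" "0 \<noteq> m - 1" using m3 by auto
  have \<sigma>0: "\<sigma> 0 = 0"
  proof -
    have "theta1 G R x m (\<one>,0) (x, m-1)" using m1 x by (simp add: theta1_simp)
    then have "theta1 G R x m (\<one> \<otimes> a 0, \<sigma> 0) (x \<otimes> a (m-1), \<sigma> (m-1))"
      using pres[OF one_closed x m1(1) m1(2)] by blast
    moreover have ne: "\<sigma> 0 \<noteq> \<sigma> (m-1)" using inj m1 unfolding inj_on_def by force
    ultimately have "x \<otimes> a 0 = volt G x m (\<sigma> 0) (\<sigma> (m-1)) \<otimes> a 0"
      using theta1_inter3[OF m3 x ne] aeq[of "m-1"] a m1 by simp
    then have "x = volt G x m (\<sigma> 0) (\<sigma> (m-1))" using a m1 x volt_closed by simp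
    moreover have "x \<noteq> inv x" using xx x by (metis inv_unique' r_inv)
    ultimately show ?thesis using x1 unfolding volt_def by (auto split: if_splits)
  qed
  have sid: "i < m \<longrightarrow> (\<forall>j\<le>i. \<sigma> j = j)" for i
  proof (induction i)
    case 0 then show ?case using \<sigma>0 by simp
  next
    case (Suc i)
    show ?case
    proof
      assume i: "Suc i < m"
      then have IH: "\<forall>j\<le>i. \<sigma> j = j" using Suc by simp
      have "\<sigma> (Suc i) = Suc i"
      proof (cases "\<sigma> (Suc i) = \<sigma> i + 1")
        case True then show ?thesis using IH by simp
      next
        case False
        then have "\<sigma> i = \<sigma> (Suc i) + 1" using step[of i] i by simp
        then have "i \<ge> 1" "\<sigma> (Suc i) = \<sigma> (i - 1)" using IH by auto
        moreover have "Suc i \<in> {..<m}" "i - 1 \<in> {..<m}" using i by auto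
        ultimately have "Suc i = i - 1" using inj_onD[OF inj] by blast
        then show ?thesis by simp
      qed
      then show "\<forall>j\<le>Suc i. \<sigma> j = j" using IH le_Suc_eq by auto
    qed
  qed
  show ?thesis using sid aeq by blast
qed

lemma right_eq_iff: "a \<in> carrier G \<Longrightarrow> c \<in> carrier G \<Longrightarrow> g \<in> carrier G \<Longrightarrow> h \<in> carrier G
   \<Longrightarrow> h \<otimes> a = c \<otimes> (g \<otimes> a) \<longleftrightarrow> h = c \<otimes> g"
  by (metis m_assoc m_closed right_cancel)

lemma theta1_right:
  assumes Rc: "R \<subseteq> carrier G" and x: "x \<in> carrier G"
    and g: "g \<in> carrier G" and h: "h \<in> carrier G" and a: "a \<in> carrier G"
  shows "theta1 G R x m (g,i) (h,j) \<longleftrightarrow> theta1 G R x m (g \<otimes> a, i) (h \<otimes> a, j)"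
proof -
  have r: "\<And>r. r \<in> R \<Longrightarrow> r \<in> carrier G" using Rc by auto
  show ?thesis using g h a x
    by (simp add: theta1_simp right_eq_iff r right_eq_iff[of a _ h g] right_eq_iff[of a _ g h] cong: bex_cong)
qed

lemma reg_gen:
  assumes fin: "finite (carrier G)" and cs: "cayley_subset G R"
    and EL: "\<And>u v. E u v \<Longrightarrow> u \<in> layers G m \<and> v \<in> layers G m"
    and Eintra: "\<And>g h i. g \<in> carrier G \<Longrightarrow> h \<in> carrier G \<Longrightarrow> i < m
      \<Longrightarrow> E (g,i) (h,i) \<longleftrightarrow> cay_adj G R g h"
    and B: "\<And>g i. g \<in> carrier G \<Longrightarrow> i < m \<Longrightarrow> card {u. snd u \<noteq> i \<and> E (g,i) u} = c"
  shows "regular_graph (layers G m) E"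
  unfolding regular_graph_def
proof (intro exI ballI)
  fix v assume v: "v \<in> layers G m"
  then obtain g i where vi: "v = (g,i)" "g \<in> carrier G" "i < m" by (cases v) auto
  have Rc: "R \<subseteq> carrier G" and Rinv: "\<And>r. r \<in> R \<Longrightarrow> inv r \<in> R" using cs unfolding cayley_subset_def by auto
  have finL: "finite (layers G m)" using fin unfolding layers_def by simp
  let ?A = "(\<lambda>r. (r \<otimes> g, i)) ` R"
  let ?B = "{u. snd u \<noteq> i \<and> E (g,i) u}"
  have split: "{u \<in> layers G m. E v u} = ?A \<union> ?B"
  proof (intro equalityI subsetI)
    fix u assume u: "u \<in> {u \<in> layers G m. E v u}"
    obtain h j where uj: "u = (h,j)" by (cases u)
    show "u \<in> ?A \<union> ?B"
    proof (cases "j = i")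
      case True
      then have "cay_adj G R g h" using u uj vi Eintra by auto
      then obtain r where r: "r \<in> R" "h = r \<otimes> g \<or> g = r \<otimes> h" unfolding cay_adj_def by blast
      have "h = r \<otimes> g \<or> h = inv r \<otimes> g"
        using r Rc vi uj u by (auto simp: inv_solve_left)
      then have "\<exists>r'\<in>R. h = r' \<otimes> g" using r Rinv by blast
      then show ?thesis using uj True by auto
    next
      case False then show ?thesis using u uj vi by auto
    qed
  next
    fix u assume u: "u \<in> ?A \<union> ?B"
    show "u \<in> {u \<in> layers G m. E v u}"
    proof (cases "u \<in> ?A")
      case True
      then obtain r where r: "r \<in> R" "u = (r \<otimes> g, i)" by blast
      have "cay_adj G R g (r \<otimes> g)" unfolding cay_adj_def using r Rc vi by auto
      then show ?thesis using r Rc vi Eintra by auto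
    next
      case False
      then have "E (g,i) u" using u by blast
      then show ?thesis using EL[of "(g,i)" u] vi by auto
    qed
  qed
  have dis: "?A \<inter> ?B = {}" by auto
  have finB: "finite ?B" using EL finite_subset[OF _ finL] by (metis (mono_tags, lifting) mem_Collect_eq subsetI)
  have finR: "finite R" using Rc fin finite_subset by blast
  have "inj_on (\<lambda>r. (r \<otimes> g, i)) R"
    using Rc vi unfolding inj_on_def by (metis right_cancel subsetD prod.inject)
  then have cA: "card ?A = card R" by (rule card_image)
  show "card {u \<in> layers G m. E v u} = card R + c"
    using split dis finB finR cA B[OF vi(2,3)] by (simp add: card_Un_disjoint)
qed

lemma card_J3:
  assumes m3: "3 \<le> m" and i: "i < m"
  shows "card {j. j < m \<and> j \<noteq> i \<and> ladj m i j} = 2"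
proof -
  consider "i = 0" | "i = m - 1" | "0 < i \<and> i < m - 1" using i by linarith
  then show ?thesis
  proof cases
    case 1
    then have "{j. j < m \<and> j \<noteq> i \<and> ladj m i j} = {1, m - 1}" using m3 unfolding ladj_def by auto
    then show ?thesis using m3 by simp
  next
    case 2
    then have "{j. j < m \<and> j \<noteq> i \<and> ladj m i j} = {0, m - 2}" using m3 unfolding ladj_def by auto
    then show ?thesis using m3 by simp
  next
    case 3
    then have "{j. j < m \<and> j \<noteq> i \<and> ladj m i j} = {i - 1, i + 1}" using m3 unfolding ladj_def by auto
    then show ?thesis using 3 by simp
  qed
qed

lemma theta1_B3:
  assumes m3: "3 \<le> m" and x: "x \<in> carrier G" and g: "g \<in> carrier G" and i: "i < m"
  shows "card {u. snd u \<noteq> i \<and> theta1 G R x m (g,i) u} = 2"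
proof -
  let ?J = "{j. j < m \<and> j \<noteq> i \<and> ladj m i j}"
  have "{u. snd u \<noteq> i \<and> theta1 G R x m (g,i) u} = (\<lambda>j. (volt G x m i j \<otimes> g, j)) ` ?J"
  proof (intro equalityI subsetI)
    fix u assume u: "u \<in> {u. snd u \<noteq> i \<and> theta1 G R x m (g,i) u}"
    obtain h j where uj: "u = (h,j)" by (cases u)
    have "j \<noteq> i" using u uj by simp
    then show "u \<in> (\<lambda>j. (volt G x m i j \<otimes> g, j)) ` ?J"
      using u uj theta1_inter3[OF m3 x, where i=i and j=j and g=g and h=h and R=R] by auto
  next
    fix u assume "u \<in> (\<lambda>j. (volt G x m i j \<otimes> g, j)) ` ?J"
    then obtain j where j: "j \<in> ?J" "u = (volt G x m i j \<otimes> g, j)" by blast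
    then have ij: "i \<noteq> j" by auto
    show "u \<in> {u. snd u \<noteq> i \<and> theta1 G R x m (g,i) u}"
      using j theta1_inter3[OF m3 x ij, where g=g and R=R] g i x volt_closed by auto
  qed
  moreover have inj: "inj_on (\<lambda>j. (volt G x m i j \<otimes> g, j)) ?J" by (auto simp: inj_on_def)
  ultimately show ?thesis using card_J3[OF m3 i] card_image[OF inj] by simp
qed

lemma noncentral:
  assumes "x \<in> carrier G" "x \<notin> group_center G"
  shows "\<exists>g\<in>carrier G. g \<otimes> x \<noteq> x \<otimes> g"
proof -
  obtain g where g: "g \<in> carrier G" "x \<otimes> g \<noteq> g \<otimes> x" using assms unfolding group_center_def by blast
  show ?thesis
  proof (rule bexI[of _ g])
    show "g \<otimes> x \<noteq> x \<otimes> g" using g(2) by (rule not_sym)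
  qed (rule g(1))
qed

lemma ord_gt2:
  assumes "x \<in> carrier G" "ord x > 2"
  shows "x \<otimes> x \<noteq> \<one>"
proof
  assume "x \<otimes> x = \<one>"
  then have "x [^] (2::nat) = \<one>" using assms by (simp add: numeral_2_eq_2)
  then have "ord x dvd 2" using pow_eq_id assms by blast
  then show False using assms(2) dvd_imp_le[of "ord x" 2] by linarith
qed

lemma theta1_EL: "theta1 G R x m u v \<Longrightarrow> u \<in> layers G m \<and> v \<in> layers G m"
  by (simp add: theta1_def)

lemma theta1_m3:
  assumes fin: "finite (carrier G)" and m3: "3 \<le> m" and cs: "cayley_subset G R" and grr: "is_GRR G R"
    and gen: "generate G (R - isolated_in_R G R) = carrier G"
    and x: "x \<in> carrier G" and xc: "x \<notin> group_center G" and ox: "ord x > 2"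
  shows "is_mGRR G m (theta1 G R x m)"
proof -
  have Rc: "R \<subseteq> carrier G" and R1: "\<one> \<notin> R" using cs unfolding cayley_subset_def by auto
  have nc: "\<exists>g\<in>carrier G. g \<otimes> x \<noteq> x \<otimes> g" using noncentral[OF x xc] .
  have x1: "x \<noteq> \<one>" using nc x by auto
  have xx: "x \<otimes> x \<noteq> \<one>" using ord_gt2[OF x ox] .
  have m2: "2 \<le> m" using m3 by simp
  have Eintra: "\<And>g h i. g \<in> carrier G \<Longrightarrow> h \<in> carrier G \<Longrightarrow> i < m
      \<Longrightarrow> theta1 G R x m (g,i) (h,i) \<longleftrightarrow> cay_adj G R g h"
    using theta1_intra[OF m2] by auto
  have reg: "regular_graph (layers G m) (theta1 G R x m)"
    using fin cs theta1_EL Eintra theta1_B3[OF m3 x] by (rule reg_gen[where E="theta1 G R x m"])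
  have "{f. graph_aut (layers G m) (theta1 G R x m) f} = layer_right_mult G m ` carrier G"
  proof (rule aut_char[OF cs grr gen])
    show "0 < m" using m3 by simp
    show "\<And>u v. theta1 G R x m u v \<Longrightarrow> u \<in> layers G m \<and> v \<in> layers G m" by (rule theta1_EL)
    show "\<And>g h i. g \<in> carrier G \<Longrightarrow> h \<in> carrier G \<Longrightarrow> i < m
      \<Longrightarrow> theta1 G R x m (g,i) (h,i) \<longleftrightarrow> cay_adj G R g h" by (rule Eintra)
    show "\<And>g h i j a. g \<in> carrier G \<Longrightarrow> h \<in> carrier G \<Longrightarrow> a \<in> carrier G \<Longrightarrow> i < m \<Longrightarrow> j < m
      \<Longrightarrow> theta1 G R x m (g,i) (h,j) \<longleftrightarrow> theta1 G R x m (g \<otimes> a, i) (h \<otimes> a, j)"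
      using theta1_right[OF Rc x] by blast
    show "\<And>u v w. theta1 G R x m u v \<Longrightarrow> theta1 G R x m u w \<Longrightarrow> theta1 G R x m v w \<Longrightarrow> snd u = snd v"
      using theta1_tri3[OF m3 x x1 R1 Rc] by blast
    show "\<And>\<sigma> a. (\<And>i. i < m \<Longrightarrow> \<sigma> i < m) \<Longrightarrow> inj_on \<sigma> {..<m}
      \<Longrightarrow> (\<And>i. i < m \<Longrightarrow> a i \<in> carrier G)
      \<Longrightarrow> (\<And>g h i j. g \<in> carrier G \<Longrightarrow> h \<in> carrier G \<Longrightarrow> i < m \<Longrightarrow> j < m \<Longrightarrow> theta1 G R x m (g,i) (h,j)
            \<Longrightarrow> theta1 G R x m (g \<otimes> a i, \<sigma> i) (h \<otimes> a j, \<sigma> j))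
      \<Longrightarrow> (\<forall>i<m. \<sigma> i = i \<and> a i = a 0)"
      using theta1_rigid3[OF m3 x nc xx] by blast
  qed
  then show ?thesis using reg unfolding is_mGRR_def by simp
qed

end

definition tlg :: "('a, 'b) monoid_scheme \<Rightarrow> 'a set \<Rightarrow> 'a set \<Rightarrow> 'a \<times> nat \<Rightarrow> 'a \<times> nat \<Rightarrow> bool" where
  "tlg G R V u v \<longleftrightarrow> u \<in> layers G 2 \<and> v \<in> layers G 2 \<and>
    ((snd u = snd v \<and> cay_adj G R (fst u) (fst v))
     \<or> (snd u = 0 \<and> snd v = 1 \<and> (\<exists>c\<in>V. fst v = c \<otimes>\<^bsub>G\<^esub> fst u))
     \<or> (snd u = 1 \<and> snd v = 0 \<and> (\<exists>c\<in>V. fst u = c \<otimes>\<^bsub>G\<^esub> fst v)))"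

lemma tlg_sym: "tlg G R V u v \<longleftrightarrow> tlg G R V v u"
  unfolding tlg_def cay_adj_def by auto

lemma tlg_EL: "tlg G R V u v \<Longrightarrow> u \<in> layers G 2 \<and> v \<in> layers G 2"
  unfolding tlg_def by blast

lemma tlg_intra: "i < 2 \<Longrightarrow> g \<in> carrier G \<Longrightarrow> h \<in> carrier G \<Longrightarrow> tlg G R V (g,i) (h,i) \<longleftrightarrow> cay_adj G R g h"
  unfolding tlg_def by auto

lemma tlg_01: "tlg G R V (g,0) (h,1) \<longleftrightarrow> g \<in> carrier G \<and> h \<in> carrier G \<and> (\<exists>c\<in>V. h = c \<otimes>\<^bsub>G\<^esub> g)"
  unfolding tlg_def by simp

lemma theta2_tl: "theta2 G R x = tlg G R {x}"
proof (intro ext)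
  fix u v :: "'a \<times> nat"
  obtain g i where u: "u = (g,i)" by (cases u)
  obtain h j where v: "v = (h,j)" by (cases v)
  show "theta2 G R x u v = tlg G R {x} u v"
    unfolding u v theta2_def theta2_gen_def tlg_def cay_adj_def
    by (cases i; cases j) auto
qed

context group
begin

lemma theta1_tl: "theta1 G R x 2 = tlg G R {\<one>, x}"
proof (intro ext)
  fix u v :: "'a \<times> nat"
  obtain g i where u: "u = (g,i)" by (cases u)
  obtain h j where v: "v = (h,j)" by (cases v)
  show "theta1 G R x 2 u v = tlg G R {\<one>, x} u v"
    unfolding u v theta1_simp tlg_def cay_adj_def
    by (cases i; cases j) auto
qed

lemma cay_norm:
  assumes cs: "cayley_subset G R" and "cay_adj G R g h"
  shows "\<exists>r\<in>R. h = r \<otimes> g"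
proof -
  have Rc: "R \<subseteq> carrier G" and Rinv: "\<And>r. r \<in> R \<Longrightarrow> inv r \<in> R" using cs unfolding cayley_subset_def by auto
  obtain r where r: "r \<in> R" "h = r \<otimes> g \<or> g = r \<otimes> h" "g \<in> carrier G" "h \<in> carrier G"
    using assms(2) unfolding cay_adj_def by blast
  have "h = r \<otimes> g \<or> h = inv r \<otimes> g"
    using r Rc by (auto simp: inv_solve_left)
  then show ?thesis using r Rinv by blast
qed

lemma tlg_right:
  assumes Vc: "V \<subseteq> carrier G" and Rc: "R \<subseteq> carrier G"
    and g: "g \<in> carrier G" and h: "h \<in> carrier G" and a: "a \<in> carrier G"
  shows "tlg G R V (g,i) (h,j) \<longleftrightarrow> tlg G R V (g \<otimes> a, i) (h \<otimes> a, j)"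
proof -
  have r: "\<And>r. r \<in> R \<Longrightarrow> r \<in> carrier G" using Rc by auto
  have c: "\<And>r. r \<in> V \<Longrightarrow> r \<in> carrier G" using Vc by auto
  show ?thesis using g h a
    by (simp add: tlg_def cay_adj_def right_eq_iff r c right_eq_iff[of a _ h g] right_eq_iff[of a _ g h] cong: bex_cong)
qed

lemma tlg_tri01:
  assumes cs: "cayley_subset G R" and Vc: "V \<subseteq> carrier G"
    and bad: "\<And>c1 c2. c1 \<in> V \<Longrightarrow> c2 \<in> V \<Longrightarrow> inv c2 \<otimes> c1 \<notin> R \<and> c1 \<otimes> inv c2 \<notin> R"
    and uv: "tlg G R V (g,0) (h,1)" and uw: "tlg G R V (g,0) w" and vw: "tlg G R V (h,1) w"
  shows False
proof -
  have Rc: "R \<subseteq> carrier G" using cs unfolding cayley_subset_def by auto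
  obtain k l where w: "w = (k,l)" by (cases w)
  obtain c1 where c1: "c1 \<in> V" "h = c1 \<otimes> g" and gh: "g \<in> carrier G" "h \<in> carrier G"
    using uv[unfolded tlg_01] by blast
  have l: "l < 2" "k \<in> carrier G" using uw w unfolding tlg_def by auto
  have c1c: "c1 \<in> carrier G" using c1 Vc by auto
  show False
  proof (cases "l = 0")
    case True
    obtain r where r: "r \<in> R" "k = r \<otimes> g" using cay_norm[OF cs] uw w True gh l by (auto simp: tlg_intra)
    have "tlg G R V (k,0) (h,1)" using vw w True tlg_sym by metis
    then obtain c2 where c2: "c2 \<in> V" "h = c2 \<otimes> k" unfolding tlg_01 by blast
    have rc: "r \<in> carrier G" and c2c: "c2 \<in> carrier G" using r Rc c2 Vc by auto
    have "c1 \<otimes> g = (c2 \<otimes> r) \<otimes> g" using c1 c2 r gh rc c2c by (simp add: m_assoc)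
    then have "c1 = c2 \<otimes> r" using gh c1c c2c rc by simp
    then have "r = inv c2 \<otimes> c1" using c1c c2c rc by (simp add: inv_solve_left)
    then show False using bad[OF c1(1) c2(1)] r by simp
  next
    case False
    then have l1: "l = 1" using l by simp
    obtain r where r: "r \<in> R" "k = r \<otimes> h" using cay_norm[OF cs] vw w l1 gh l by (auto simp: tlg_intra)
    have "tlg G R V (g,0) (k,1)" using uw w l1 by simp
    then obtain c3 where c3: "c3 \<in> V" "k = c3 \<otimes> g" unfolding tlg_01 by blast
    have rc: "r \<in> carrier G" and c3c: "c3 \<in> carrier G" using r Rc c3 Vc by auto
    have "c3 \<otimes> g = (r \<otimes> c1) \<otimes> g" using c1 c3 r gh rc c1c by (simp add: m_assoc)
    then have "c3 = r \<otimes> c1" using gh c1c c3c rc by simp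
    then have "r = c3 \<otimes> inv c1" using c1c c3c rc by (simp add: inv_solve_right)
    then show False using bad[OF c3(1) c1(1)] r by simp
  qed
qed

lemma tlg_tri:
  assumes cs: "cayley_subset G R" and Vc: "V \<subseteq> carrier G"
    and bad: "\<And>c1 c2. c1 \<in> V \<Longrightarrow> c2 \<in> V \<Longrightarrow> inv c2 \<otimes> c1 \<notin> R \<and> c1 \<otimes> inv c2 \<notin> R"
    and uv: "tlg G R V u v" and uw: "tlg G R V u w" and vw: "tlg G R V v w"
  shows "snd u = snd v"
proof (rule ccontr)
  assume ne: "snd u \<noteq> snd v"
  obtain g i where u: "u = (g,i)" by (cases u)
  obtain h j where v: "v = (h,j)" by (cases v)
  have "i < 2" "j < 2" using uv u v unfolding tlg_def by auto
  then consider "i = 0" "j = 1" | "i = 1" "j = 0" using ne u v by fastforce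
  then show False
  proof cases
    case 1 then show False using tlg_tri01[OF cs Vc bad] uv uw vw u v by blast
  next
    case 2
    have "tlg G R V (h,0) (g,1)" using uv u v 2 tlg_sym by metis
    then show False using tlg_tri01[OF cs Vc bad] uv uw vw u v 2 by blast
  qed
qed

lemma tlg_B:
  assumes Vc: "V \<subseteq> carrier G" and g: "g \<in> carrier G" and i: "i < 2"
  shows "card {u. snd u \<noteq> i \<and> tlg G R V (g,i) u} = card V"
proof -
  let ?f = "if i = 0 then (\<lambda>c. (c \<otimes> g, 1::nat)) else (\<lambda>c. (inv c \<otimes> g, 0))"
  have "{u. snd u \<noteq> i \<and> tlg G R V (g,i) u} = ?f ` V"
  proof (intro equalityI subsetI)
    fix u assume u: "u \<in> {u. snd u \<noteq> i \<and> tlg G R V (g,i) u}"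
    obtain h j where uj: "u = (h,j)" by (cases u)
    show "u \<in> ?f ` V"
    proof (cases "i = 0")
      case True
      then show ?thesis using u uj unfolding tlg_def by auto
    next
      case False
      then have "i = 1" using i by simp
      then obtain c where c: "c \<in> V" "g = c \<otimes> h" "j = 0" "h \<in> carrier G" using u uj unfolding tlg_def by auto
      then have "h = inv c \<otimes> g" using Vc g by (auto simp: inv_solve_left)
      then show ?thesis using c uj False by auto
    qed
  next
    fix u assume "u \<in> ?f ` V"
    then obtain c where c: "c \<in> V" "u = ?f c" by blast
    have cc: "c \<in> carrier G" using c Vc by auto
    show "u \<in> {u. snd u \<noteq> i \<and> tlg G R V (g,i) u}"
    proof (cases "i = 0")
      case True then show ?thesis using c cc g unfolding tlg_def by auto
    next
      case False
      then have "i = 1" using i by simp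
      then show ?thesis using c cc g False unfolding tlg_def by (auto simp: m_assoc[symmetric] intro!: bexI[of _ c])
    qed
  qed
  moreover have "inj_on ?f V"
    using Vc g unfolding inj_on_def by (auto simp: subset_iff)
  ultimately show ?thesis by (simp add: card_image)
qed

lemma tlg_10: "tlg G R V (g,1) (h,0) \<longleftrightarrow> g \<in> carrier G \<and> h \<in> carrier G \<and> (\<exists>c\<in>V. g = c \<otimes> h)"
  using tlg_sym[of G R V "(g,1)" "(h,0)"] tlg_01[of G R V h g] by auto

lemma tlg_01s: "tlg G R V (g,0) (h,Suc 0) \<longleftrightarrow> g \<in> carrier G \<and> h \<in> carrier G \<and> (\<exists>c\<in>V. h = c \<otimes> g)"
  using tlg_01[of G R V g h] by simp

lemma tlg_10s: "tlg G R V (g,Suc 0) (h,0) \<longleftrightarrow> g \<in> carrier G \<and> h \<in> carrier G \<and> (\<exists>c\<in>V. g = c \<otimes> h)"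
  using tlg_10[of R V g h] by simp

lemma tlg_mGRR:
  assumes fin: "finite (carrier G)" and cs: "cayley_subset G R" and grr: "is_GRR G R"
    and gen: "generate G (R - isolated_in_R G R) = carrier G"
    and Vc: "V \<subseteq> carrier G"
    and bad: "\<And>c1 c2. c1 \<in> V \<Longrightarrow> c2 \<in> V \<Longrightarrow> inv c2 \<otimes> c1 \<notin> R \<and> c1 \<otimes> inv c2 \<notin> R"
    and rigid: "\<And>\<sigma> a. (\<And>i. i < 2 \<Longrightarrow> \<sigma> i < 2) \<Longrightarrow> inj_on \<sigma> {..<2}
      \<Longrightarrow> (\<And>i. i < 2 \<Longrightarrow> a i \<in> carrier G)
      \<Longrightarrow> (\<And>g h i j. g \<in> carrier G \<Longrightarrow> h \<in> carrier G \<Longrightarrow> i < 2 \<Longrightarrow> j < 2 \<Longrightarrow> tlg G R V (g,i) (h,j)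
            \<Longrightarrow> tlg G R V (g \<otimes> a i, \<sigma> i) (h \<otimes> a j, \<sigma> j))
      \<Longrightarrow> (\<forall>i<2. \<sigma> i = i \<and> a i = a 0)"
  shows "is_mGRR G 2 (tlg G R V)"
proof -
  have Rc: "R \<subseteq> carrier G" using cs unfolding cayley_subset_def by auto
  have Eintra: "\<And>g h i. g \<in> carrier G \<Longrightarrow> h \<in> carrier G \<Longrightarrow> i < 2
      \<Longrightarrow> tlg G R V (g,i) (h,i) \<longleftrightarrow> cay_adj G R g h"
    by (simp add: tlg_intra)
  have B: "\<And>g i. g \<in> carrier G \<Longrightarrow> i < 2 \<Longrightarrow> card {u. snd u \<noteq> i \<and> tlg G R V (g,i) u} = card V"
    by (rule tlg_B[OF Vc])
  have reg: "regular_graph (layers G 2) (tlg G R V)"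
    using fin cs tlg_EL Eintra B by (rule reg_gen[where E="tlg G R V" and c="card V"])
  have "{f. graph_aut (layers G 2) (tlg G R V) f} = layer_right_mult G 2 ` carrier G"
  proof (rule aut_char[OF cs grr gen])
    show "0 < (2::nat)" by simp
    show "\<And>u v. tlg G R V u v \<Longrightarrow> u \<in> layers G 2 \<and> v \<in> layers G 2" by (rule tlg_EL)
    show "\<And>g h i. g \<in> carrier G \<Longrightarrow> h \<in> carrier G \<Longrightarrow> i < 2
      \<Longrightarrow> tlg G R V (g,i) (h,i) \<longleftrightarrow> cay_adj G R g h" by (rule Eintra)
    show "\<And>g h i j a. g \<in> carrier G \<Longrightarrow> h \<in> carrier G \<Longrightarrow> a \<in> carrier G \<Longrightarrow> i < 2 \<Longrightarrow> j < 2
      \<Longrightarrow> tlg G R V (g,i) (h,j) \<longleftrightarrow> tlg G R V (g \<otimes> a, i) (h \<otimes> a, j)"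
      using tlg_right[OF Vc Rc] by blast
    show "\<And>u v w. tlg G R V u v \<Longrightarrow> tlg G R V u w \<Longrightarrow> tlg G R V v w \<Longrightarrow> snd u = snd v"
      using tlg_tri[OF cs Vc bad] by blast
    show "\<And>\<sigma> a. (\<And>i. i < 2 \<Longrightarrow> \<sigma> i < 2) \<Longrightarrow> inj_on \<sigma> {..<2}
      \<Longrightarrow> (\<And>i. i < 2 \<Longrightarrow> a i \<in> carrier G)
      \<Longrightarrow> (\<And>g h i j. g \<in> carrier G \<Longrightarrow> h \<in> carrier G \<Longrightarrow> i < 2 \<Longrightarrow> j < 2 \<Longrightarrow> tlg G R V (g,i) (h,j)
            \<Longrightarrow> tlg G R V (g \<otimes> a i, \<sigma> i) (h \<otimes> a j, \<sigma> j))
      \<Longrightarrow> (\<forall>i<2. \<sigma> i = i \<and> a i = a 0)"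
      using rigid by blast
  qed
  then show ?thesis using reg unfolding is_mGRR_def by simp
qed

lemma sigma2:
  assumes "\<And>i::nat. i < 2 \<Longrightarrow> \<sigma> i < (2::nat)" "inj_on \<sigma> {..<2}"
  shows "(\<sigma> 0 = 0 \<and> \<sigma> 1 = 1) \<or> (\<sigma> 0 = 1 \<and> \<sigma> 1 = 0)"
proof -
  have "\<sigma> 0 < 2" "\<sigma> 1 < 2" using assms(1) by auto
  moreover have "\<sigma> 0 \<noteq> \<sigma> 1" using assms(2) unfolding inj_on_def by force
  ultimately show ?thesis by linarith
qed

lemma all2: "(\<forall>i<2. P i) \<longleftrightarrow> P 0 \<and> P (1::nat)"
  using less_2_cases by auto

lemma case3_rigid:
  assumes x: "x \<in> carrier G" and nc: "\<exists>g\<in>carrier G. g \<otimes> x \<noteq> x \<otimes> g" and xx: "x \<otimes> x \<noteq> \<one>"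
    and \<sigma>m: "\<And>i. i < 2 \<Longrightarrow> \<sigma> i < 2" and inj: "inj_on \<sigma> {..<2}"
    and a: "\<And>i. i < 2 \<Longrightarrow> a i \<in> carrier G"
    and pres: "\<And>g h i j. g \<in> carrier G \<Longrightarrow> h \<in> carrier G \<Longrightarrow> i < 2 \<Longrightarrow> j < 2 \<Longrightarrow> tlg G R {\<one>, x} (g,i) (h,j)
            \<Longrightarrow> tlg G R {\<one>, x} (g \<otimes> a i, \<sigma> i) (h \<otimes> a j, \<sigma> j)"
  shows "\<forall>i<2. \<sigma> i = i \<and> a i = a 0"
proof -
  have x1: "x \<noteq> \<one>" using nc x by auto
  have a0: "a 0 \<in> carrier G" and a1: "a 1 \<in> carrier G" using a by auto
  have V: "{\<one>, x} \<subseteq> carrier G" using x by auto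
  have e1: "tlg G R {\<one>, x} (g,0) (g,1)" if "g \<in> carrier G" for g using that x by (simp add: tlg_01 tlg_01s)
  have e2: "tlg G R {\<one>, x} (g,0) (x \<otimes> g,1)" if "g \<in> carrier G" for g using that x by (simp add: tlg_01 tlg_01s)
  have p1: "tlg G R {\<one>, x} (g \<otimes> a 0, \<sigma> 0) (g \<otimes> a 1, \<sigma> 1)" if g: "g \<in> carrier G" for g
    using pres[OF g g _ _ e1[OF g]] by simp
  have p2: "tlg G R {\<one>, x} (\<one> \<otimes> a 0, \<sigma> 0) ((x \<otimes> \<one>) \<otimes> a 1, \<sigma> 1)"
    using pres[OF one_closed _ _ _ e2[OF one_closed]] x by simp
  have s01: "\<sigma> 0 < 2" "\<sigma> 1 < 2" using \<sigma>m by auto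
  have s0ne: "\<sigma> 0 \<noteq> \<sigma> 1" using inj unfolding inj_on_def by force
  consider "\<sigma> 0 = 0" "\<sigma> 1 = 1" | "\<sigma> 0 = 1" "\<sigma> 1 = 0" using s01 s0ne by linarith
  then show ?thesis
  proof cases
    case 1
    have q1: "a 1 = a 0 \<or> a 1 = x \<otimes> a 0" using p1[OF one_closed] 1 a0 a1 by (simp add: tlg_01 tlg_01s)
    have q2: "x \<otimes> a 1 = a 0 \<or> x \<otimes> a 1 = x \<otimes> a 0" using p2 1 a0 a1 x by (simp add: tlg_01 tlg_01s)
    have "a 1 = a 0"
    proof (rule ccontr)
      assume ne: "a 1 \<noteq> a 0"
      then have A: "a 1 = x \<otimes> a 0" using q1 by blast
      have "x \<otimes> a 1 \<noteq> x \<otimes> a 0" using ne x a0 a1 by simp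
      then have "x \<otimes> a 1 = a 0" using q2 by blast
      then have "x \<otimes> (x \<otimes> a 0) = a 0" unfolding A .
      then have "x \<otimes> x = \<one>" using x a0 by (simp add: m_assoc[symmetric])
      then show False using xx by simp
    qed
    then show ?thesis using 1 unfolding all2 by simp
  next
    case 2
    have q1: "a 0 = a 1 \<or> a 0 = x \<otimes> a 1" using p1[OF one_closed] 2 a0 a1 by (simp add: tlg_10 tlg_10s)
    have q2: "a 0 = x \<otimes> a 1 \<or> a 0 = x \<otimes> (x \<otimes> a 1)" using p2 2 a0 a1 x by (simp add: tlg_10 tlg_10s)
    have A: "a 0 = x \<otimes> a 1"
    proof (rule ccontr)
      assume ne: "a 0 \<noteq> x \<otimes> a 1"
      then have e1: "a 0 = a 1" and e2: "a 0 = x \<otimes> (x \<otimes> a 1)" using q1 q2 by blast+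
      have "x \<otimes> (x \<otimes> a 1) = a 1" using trans[OF sym[OF e2] e1] .
      then have "x \<otimes> x \<otimes> a 1 = a 1" using x a1 by (simp add: m_assoc)
      then have "x \<otimes> x = \<one>" using x a1 by simp
      then show False using xx by simp
    qed
    have "g \<otimes> x = x \<otimes> g" if g: "g \<in> carrier G" for g
    proof -
      have "g \<otimes> a 0 = g \<otimes> a 1 \<or> g \<otimes> a 0 = x \<otimes> (g \<otimes> a 1)" using p1[OF g] 2 g a0 a1 by (simp add: tlg_10 tlg_10s)
      then have "g \<otimes> (x \<otimes> a 1) = g \<otimes> a 1 \<or> g \<otimes> (x \<otimes> a 1) = x \<otimes> (g \<otimes> a 1)"
        unfolding A .
      then have "x = \<one> \<or> g \<otimes> x = x \<otimes> g" using g x a1 by (simp add: m_assoc[symmetric])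
      then show ?thesis using x1 by blast
    qed
    then show ?thesis using nc by blast
  qed
qed

lemma case2_rigid:
  assumes x: "x \<in> carrier G" and nc: "\<exists>g\<in>carrier G. g \<otimes> (x \<otimes> x) \<noteq> (x \<otimes> x) \<otimes> g"
    and \<sigma>m: "\<And>i. i < 2 \<Longrightarrow> \<sigma> i < 2" and inj: "inj_on \<sigma> {..<2}"
    and a: "\<And>i. i < 2 \<Longrightarrow> a i \<in> carrier G"
    and pres: "\<And>g h i j. g \<in> carrier G \<Longrightarrow> h \<in> carrier G \<Longrightarrow> i < 2 \<Longrightarrow> j < 2 \<Longrightarrow> tlg G R {x} (g,i) (h,j)
            \<Longrightarrow> tlg G R {x} (g \<otimes> a i, \<sigma> i) (h \<otimes> a j, \<sigma> j)"
  shows "\<forall>i<2. \<sigma> i = i \<and> a i = a 0"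
proof -
  have a0: "a 0 \<in> carrier G" and a1: "a 1 \<in> carrier G" using a by auto
  have e2: "tlg G R {x} (g,0) (x \<otimes> g,1)" if "g \<in> carrier G" for g using that x by (simp add: tlg_01 tlg_01s)
  have p2: "tlg G R {x} (g \<otimes> a 0, \<sigma> 0) ((x \<otimes> g) \<otimes> a 1, \<sigma> 1)" if g: "g \<in> carrier G" for g
    using pres[OF g _ _ _ e2[OF g]] x g by simp
  have s01: "\<sigma> 0 < 2" "\<sigma> 1 < 2" using \<sigma>m by auto
  have s0ne: "\<sigma> 0 \<noteq> \<sigma> 1" using inj unfolding inj_on_def by force
  consider "\<sigma> 0 = 0" "\<sigma> 1 = 1" | "\<sigma> 0 = 1" "\<sigma> 1 = 0" using s01 s0ne by linarith
  then show ?thesis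
  proof cases
    case 1
    have "x \<otimes> a 1 = x \<otimes> a 0" using p2[OF one_closed] 1 a0 a1 x by (simp add: tlg_01 tlg_01s)
    then have "a 1 = a 0" using x a0 a1 by simp
    then show ?thesis using 1 unfolding all2 by simp
  next
    case 2
    have q: "g \<otimes> a 0 = (x \<otimes> x) \<otimes> (g \<otimes> a 1)" if g: "g \<in> carrier G" for g
      using p2[OF g] 2 g a0 a1 x by (simp add: tlg_10 tlg_10s m_assoc)
    have A: "a 0 = (x \<otimes> x) \<otimes> a 1" using q[OF one_closed] a0 a1 by simp
    have "g \<otimes> (x \<otimes> x) = (x \<otimes> x) \<otimes> g" if g: "g \<in> carrier G" for g
    proof -
      have "g \<otimes> ((x \<otimes> x) \<otimes> a 1) = (x \<otimes> x) \<otimes> (g \<otimes> a 1)" using q[OF g] unfolding A .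
      then have "(g \<otimes> (x \<otimes> x)) \<otimes> a 1 = ((x \<otimes> x) \<otimes> g) \<otimes> a 1"
        using g x a1 by (simp add: m_assoc)
      then show ?thesis using g x a1 by simp
    qed
    then show ?thesis using nc by blast
  qed
qed

lemma case3_main:
  assumes fin: "finite (carrier G)" and cs: "cayley_subset G R" and grr: "is_GRR G R"
    and gen: "generate G (R - isolated_in_R G R) = carrier G"
    and x: "x \<in> carrier G" and xc: "x \<notin> group_center G" and xR: "x \<notin> R" and ox: "ord x > 2"
  shows "is_mGRR G 2 (theta1 G R x 2)"
proof -
  have Rc: "R \<subseteq> carrier G" and R1: "\<one> \<notin> R" and Rinv: "\<And>r. r \<in> R \<Longrightarrow> inv r \<in> R"
    using cs unfolding cayley_subset_def by auto
  have ixR: "inv x \<notin> R" using Rinv[of "inv x"] xR x by auto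
  have nc: "\<exists>g\<in>carrier G. g \<otimes> x \<noteq> x \<otimes> g" using noncentral[OF x xc] .
  have xx: "x \<otimes> x \<noteq> \<one>" using ord_gt2[OF x ox] .
  have V: "{\<one>, x} \<subseteq> carrier G" using x by auto
  have bad: "inv c2 \<otimes> c1 \<notin> R \<and> c1 \<otimes> inv c2 \<notin> R" if "c1 \<in> {\<one>, x}" "c2 \<in> {\<one>, x}" for c1 c2
    using that x R1 xR ixR by auto
  have "is_mGRR G 2 (tlg G R {\<one>, x})"
    using fin cs grr gen V bad case3_rigid[OF x nc xx]
    by (rule tlg_mGRR[where V="{\<one>, x}"])
  then show ?thesis by (simp add: theta1_tl)
qed

lemma case2_main:
  assumes fin: "finite (carrier G)" and cs: "cayley_subset G R" and grr: "is_GRR G R"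
    and gen: "generate G (R - isolated_in_R G R) = carrier G"
    and x: "x \<in> carrier G" and xc: "x \<otimes> x \<notin> group_center G"
  shows "is_mGRR G 2 (theta2 G R x)"
proof -
  have R1: "\<one> \<notin> R" using cs unfolding cayley_subset_def by auto
  have nc: "\<exists>g\<in>carrier G. g \<otimes> (x \<otimes> x) \<noteq> (x \<otimes> x) \<otimes> g" using noncentral[OF _ xc] x by simp
  have V: "{x} \<subseteq> carrier G" using x by auto
  have bad: "inv c2 \<otimes> c1 \<notin> R \<and> c1 \<otimes> inv c2 \<notin> R" if "c1 \<in> {x}" "c2 \<in> {x}" for c1 c2
    using that x R1 by auto
  have "is_mGRR G 2 (tlg G R {x})"
    using fin cs grr gen V bad case2_rigid[OF x nc]
    by (rule tlg_mGRR[where V="{x}"])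
  then show ?thesis by (simp add: theta2_tl)
qed

end

theorem lemma3p7:
  fixes G :: "('a, 'b) monoid_scheme" and R :: "'a set" and x :: 'a and m :: nat
  assumes grp: "group G"
    and fin: "finite (carrier G)"
    and nonab: "\<exists>a\<in>carrier G. \<exists>b\<in>carrier G. a \<otimes>\<^bsub>G\<^esub> b \<noteq> b \<otimes>\<^bsub>G\<^esub> a"
    and m2: "m \<ge> 2"
    and cs: "cayley_subset G R"
    and grr: "is_GRR G R"
    and iso: "card (isolated_in_R G R) \<le> 1"
    and gen: "generate G (R - isolated_in_R G R) = carrier G"
    and xG: "x \<in> carrier G"
    and cases: "(m \<ge> 3 \<and> x \<notin> group_center G \<and> group.ord G x > 2)
      \<or> (m = 2 \<and> x \<otimes>\<^bsub>G\<^esub> x \<notin> group_center G)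
      \<or> (m = 2 \<and> (\<forall>g\<in>carrier G. g \<otimes>\<^bsub>G\<^esub> g \<in> group_center G)
           \<and> x \<notin> group_center G \<union> R \<and> group.ord G x > 2)"
  shows "((m \<ge> 3 \<and> x \<notin> group_center G \<and> group.ord G x > 2)
            \<longrightarrow> is_mGRR G m (theta1 G R x m))
       \<and> ((m = 2 \<and> x \<otimes>\<^bsub>G\<^esub> x \<notin> group_center G)
            \<longrightarrow> is_mGRR G 2 (theta2 G R x))
       \<and> ((m = 2 \<and> (\<forall>g\<in>carrier G. g \<otimes>\<^bsub>G\<^esub> g \<in> group_center G)
             \<and> x \<notin> group_center G \<union> R \<and> group.ord G x > 2)
            \<longrightarrow> is_mGRR G m (theta1 G R x m))"
proof (intro conjI impI)
  assume "3 \<le> m \<and> x \<notin> group_center G \<and> 2 < group.ord G x"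
  then show "is_mGRR G m (theta1 G R x m)"
    using group.theta1_m3[OF grp fin _ cs grr gen xG] by blast
next
  assume "m = 2 \<and> x \<otimes>\<^bsub>G\<^esub> x \<notin> group_center G"
  then show "is_mGRR G 2 (theta2 G R x)"
    using group.case2_main[OF grp fin cs grr gen xG] by blast
next
  assume h: "m = 2 \<and> (\<forall>g\<in>carrier G. g \<otimes>\<^bsub>G\<^esub> g \<in> group_center G) \<and> x \<notin> group_center G \<union> R \<and> 2 < group.ord G x"
  then have "is_mGRR G 2 (theta1 G R x 2)"
    using group.case3_main[OF grp fin cs grr gen xG] by blast
  then show "is_mGRR G m (theta1 G R x m)" using h by simp
qed

end
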